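(* Let $\mathscr{H}$ be a complex Hilbert space with $\dim\mathscr{H}>1$, let $\mathscr{A}$ be a $C^*$-algebra with $\mathbb{K}(\mathscr{H})\subseteq\mathscr{A}\subseteq\mathbb{B}(\mathscr{H})$, and let $\mathscr{E}$ be a full Hilbert $\mathscr{A}$-module. Let $S:\mathscr{E}\to\mathscr{E}$ be a nonzero bounded linear mapping satisfying $$|\langle Sx,Sy\rangle|=\|S\|^2\,|\langle x,y\rangle|\qquad(x,y\in\mathscr{E}).$$ Let $c\in\mathscr{A}$ with $\|c\|<1$, $\delta\in[0,1-\|c\|)$ and $\theta\in[0,1)$. If $T:\mathscr{E}\to\mathscr{E}$ is a linear mapping with $\|T-S\|\leq\theta\|S\|$, then $T$ is $(\delta,\varepsilon,c)$-angle preserving, where $$\varepsilon=\frac{\theta^2+2\theta+\delta+(\theta^2-2\theta+2)\|c\|}{(1-\theta)^2}.$$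
   Context: $\mathbb{B}(\mathscr{H})$ denotes the bounded operators and $\mathbb{K}(\mathscr{H})$ the compact operators on $\mathscr{H}$. A Hilbert $\mathscr{A}$-module is a right $\mathscr{A}$-module $\mathscr{E}$ with an $\mathscr{A}$-valued inner product $\langle\cdot,\cdot\rangle$ ($\mathbb{C}$-linear and $\mathscr{A}$-linear in the second variable, $\langle x,y\rangle^*=\langle y,x\rangle$, $\langle x,x\rangle\geq0$ with equality iff $x=0$) that is complete in the norm $\|x\|=\|\langle x,x\rangle\|^{1/2}$; it is full if the closed linear span of $\{\langle x,y\rangle:x,y\in\mathscr{E}\}$ is $\mathscr{A}$. For $a\in\mathscr{A}$, $|a|=(a^*a)^{1/2}$. For $\delta\geq0$ and $c\in\mathscr{A}$ with $\|c\|<1$, write $x\angle_c^\delta y$ if $\big\|\langle x,y\rangle-\|x\|\,\|y\|\,c\big\|\leq\delta\|x\|\,\|y\|$. A mapping $T:\mathscr{E}\to\mathscr{F}$ is $(\delta,\varepsilon,c)$-angle preserving if $x\angle_c^\delta y$ implies $Tx\angle_c^\varepsilon Ty$ for all $x,y\in\mathscr{E}$. *)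

theory Defs
  imports "HOL-Analysis.Analysis"
begin

class complex_vector = real_vector +
  fixes scaleC :: "complex \<Rightarrow> 'a \<Rightarrow> 'a" (infixr \<open>*\<^sub>C\<close> 75)
  assumes scaleC_add_right: "scaleC a (x + y) = scaleC a x + scaleC a y"
    and scaleC_add_left: "scaleC (a + b) x = scaleC a x + scaleC b x"
    and scaleC_scaleC: "scaleC a (scaleC b x) = scaleC (a * b) x"
    and scaleC_one: "scaleC 1 x = x"
    and scaleR_scaleC: "scaleR r x = scaleC (complex_of_real r) x"

class complex_inner = complex_vector + real_normed_vector +
  fixes cinner :: "'a \<Rightarrow> 'a \<Rightarrow> complex"
  assumes cinner_commute: "cinner x y = cnj (cinner y x)"
    and cinner_add_right: "cinner x (y + z) = cinner x y + cinner x z"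
    and cinner_scaleC_right: "cinner x (scaleC a y) = a * cinner x y"
    and cinner_self_nonneg: "Im (cinner x x) = 0 \<and> 0 \<le> Re (cinner x x)"
    and cinner_self_zero: "cinner x x = 0 \<longleftrightarrow> x = 0"
    and norm_eq_sqrt_cinner: "norm x = sqrt (Re (cinner x x))"

text \<open>Complex Hilbert space = complete complex inner product space;
  used as the sort complex_inner + complete_space.\<close>

definition clinear :: "('a::complex_vector \<Rightarrow> 'b::complex_vector) \<Rightarrow> bool" where
  "clinear f \<longleftrightarrow> (\<forall>x y. f (x + y) = f x + f y) \<and> (\<forall>c x. f (scaleC c x) = scaleC c (f x))"

definition bounded_clinear ::
  "('a::{complex_vector,real_normed_vector} \<Rightarrow> 'b::{complex_vector,real_normed_vector}) \<Rightarrow> bool" where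
  "bounded_clinear f \<longleftrightarrow> clinear f \<and> (\<exists>K. \<forall>x. norm (f x) \<le> norm x * K)"

definition cadjoint :: "('h::complex_inner \<Rightarrow> 'h) \<Rightarrow> ('h \<Rightarrow> 'h)" where
  "cadjoint f = (SOME g. \<forall>x y. cinner (f x) y = cinner x (g y))"

definition compact_op :: "('h::complex_inner \<Rightarrow> 'h) \<Rightarrow> bool" where
  "compact_op f \<longleftrightarrow> bounded_clinear f \<and> compact (closure (f ` ball 0 1))"

definition positive_op :: "('h::complex_inner \<Rightarrow> 'h) \<Rightarrow> bool" where
  "positive_op a \<longleftrightarrow> bounded_clinear a \<and>
     (\<forall>x. Im (cinner x (a x)) = 0 \<and> 0 \<le> Re (cinner x (a x)))"

definition op_sqrt :: "('h::complex_inner \<Rightarrow> 'h) \<Rightarrow> ('h \<Rightarrow> 'h)" where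
  "op_sqrt a = (THE b. positive_op b \<and> b \<circ> b = a)"

definition op_abs :: "('h::complex_inner \<Rightarrow> 'h) \<Rightarrow> ('h \<Rightarrow> 'h)" where
  "op_abs a = op_sqrt (cadjoint a \<circ> a)"

definition cstar_subalgebra :: "('h::complex_inner \<Rightarrow> 'h) set \<Rightarrow> bool" where
  "cstar_subalgebra A \<longleftrightarrow>
     A \<subseteq> {f. bounded_clinear f} \<and>
     (\<lambda>_. 0) \<in> A \<and>
     (\<forall>a\<in>A. \<forall>b\<in>A. (\<lambda>h. a h + b h) \<in> A) \<and>
     (\<forall>a\<in>A. \<forall>c. (\<lambda>h. scaleC c (a h)) \<in> A) \<and>
     (\<forall>a\<in>A. \<forall>b\<in>A. a \<circ> b \<in> A) \<and>
     (\<forall>a\<in>A. cadjoint a \<in> A) \<and>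
     (\<forall>a. bounded_clinear a \<and> (\<forall>e>0. \<exists>b\<in>A. onorm (\<lambda>h. a h - b h) < e) \<longrightarrow> a \<in> A)"

text \<open>The module is a complex vector space of type 'e, with right action
  act x a (= x a) and A-valued inner product ip x y (= <x,y>); its norm
  (the type's norm) is required to be the one induced by the inner product,
  and completeness is the sort constraint banach on 'e.\<close>
definition hilbert_module ::
  "('h::complex_inner \<Rightarrow> 'h) set \<Rightarrow> ('e::{complex_vector,banach} \<Rightarrow> ('h \<Rightarrow> 'h) \<Rightarrow> 'e)
     \<Rightarrow> ('e \<Rightarrow> 'e \<Rightarrow> ('h \<Rightarrow> 'h)) \<Rightarrow> bool" where
  "hilbert_module A act ip \<longleftrightarrow>
     (\<forall>x y. \<forall>a\<in>A. act (x + y) a = act x a + act y a) \<and>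
     (\<forall>x. \<forall>a\<in>A. \<forall>b\<in>A. act x (\<lambda>h. a h + b h) = act x a + act x b) \<and>
     (\<forall>x c. \<forall>a\<in>A. act (scaleC c x) a = scaleC c (act x a)) \<and>
     (\<forall>x c. \<forall>a\<in>A. act x (\<lambda>h. scaleC c (a h)) = scaleC c (act x a)) \<and>
     (\<forall>x. \<forall>a\<in>A. \<forall>b\<in>A. act x (a \<circ> b) = act (act x a) b) \<and>
     (\<forall>x y. ip x y \<in> A) \<and>
     (\<forall>x y z. ip x (y + z) = (\<lambda>h. ip x y h + ip x z h)) \<and>
     (\<forall>x y c. ip x (scaleC c y) = (\<lambda>h. scaleC c (ip x y h))) \<and>
     (\<forall>x y. \<forall>a\<in>A. ip x (act y a) = ip x y \<circ> a) \<and>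
     (\<forall>x y. cadjoint (ip x y) = ip y x) \<and>
     (\<forall>x. positive_op (ip x x)) \<and>
     (\<forall>x. ip x x = (\<lambda>_. 0) \<longleftrightarrow> x = 0) \<and>
     (\<forall>x. norm x = sqrt (onorm (ip x x)))"

definition full_module ::
  "('h::complex_inner \<Rightarrow> 'h) set \<Rightarrow> ('e \<Rightarrow> 'e \<Rightarrow> ('h \<Rightarrow> 'h)) \<Rightarrow> bool" where
  "full_module A ip \<longleftrightarrow>
     (\<forall>a\<in>A. \<forall>e>0. \<exists>n (xs::nat \<Rightarrow> 'e) ys (cs::nat \<Rightarrow> complex).
        onorm (\<lambda>h. a h - (\<Sum>i<n. scaleC (cs i) (ip (xs i) (ys i) h))) < e)"

definition angle_rel ::
  "('e::real_normed_vector \<Rightarrow> 'e \<Rightarrow> ('h::complex_inner \<Rightarrow> 'h)) \<Rightarrow> ('h \<Rightarrow> 'h) \<Rightarrow> real \<Rightarrow> 'e \<Rightarrow> 'e \<Rightarrow> bool" where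
  "angle_rel ip c \<delta> x y \<longleftrightarrow>
     onorm (\<lambda>h. ip x y h - (norm x * norm y) *\<^sub>R c h) \<le> \<delta> * norm x * norm y"

definition angle_preserving ::
  "('e::real_normed_vector \<Rightarrow> 'e \<Rightarrow> ('h::complex_inner \<Rightarrow> 'h)) \<Rightarrow> real \<Rightarrow> real \<Rightarrow> ('h \<Rightarrow> 'h)
     \<Rightarrow> ('e \<Rightarrow> 'e) \<Rightarrow> bool" where
  "angle_preserving ip \<delta> \<epsilon> c T \<longleftrightarrow>
     (\<forall>x y. angle_rel ip c \<delta> x y \<longrightarrow> angle_rel ip c \<epsilon> (T x) (T y))"

end

theory Submission
  imports Defs
begin


lemma scaleC_zero_right [simp]: "scaleC a (0::'a::complex_vector) = 0"
proof -
  have "scaleC a (0::'a) = scaleC a (0 + 0)" by simp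
  also have "\<dots> = scaleC a 0 + scaleC a 0" by (rule scaleC_add_right)
  finally show ?thesis by simp
qed

lemma scaleC_of_real: "scaleC (complex_of_real r) (x::'a::complex_vector) = scaleR r x"
  by (simp add: scaleR_scaleC)

lemma scaleC_zero_left [simp]: "scaleC 0 (x::'a::complex_vector) = 0"
  using scaleC_of_real[of 0 x] by simp

lemma scaleC_minus_right: "scaleC a (- (x::'a::complex_vector)) = - scaleC a x"
proof -
  have "scaleC a (- x) + scaleC a x = scaleC a (- x + x)" by (rule scaleC_add_right[symmetric])
  also have "\<dots> = 0" by simp
  finally show ?thesis by (simp add: eq_neg_iff_add_eq_0)
qed



lemma scaleC_diff_right: "scaleC a ((x::'a::complex_vector) - y) = scaleC a x - scaleC a y"
  using scaleC_add_right[of a x "- y"] by (simp only: diff_conv_add_uminus scaleC_minus_right)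

lemma scaleC_minus_left: "scaleC (- a) (x::'a::complex_vector) = - scaleC a x"
proof -
  have "scaleC (- a) x + scaleC a x = scaleC (- a + a) x" by (rule scaleC_add_left[symmetric])
  also have "\<dots> = 0" by simp
  finally show ?thesis by (simp add: eq_neg_iff_add_eq_0)
qed

lemma scaleC_diff_left: "scaleC (a - b) (x::'a::complex_vector) = scaleC a x - scaleC b x"
  using scaleC_add_left[of a "- b" x] by (simp only: diff_conv_add_uminus scaleC_minus_left)

lemma scaleC_minus1: "scaleC (-1) (x::'a::complex_vector) = - x"
  by (simp add: scaleC_minus_left scaleC_one)

lemma cinner_add_left: "cinner ((x::'a::complex_inner) + y) z = cinner x z + cinner y z"
proof -
  have "cinner (x + y) z = cnj (cinner z (x + y))" by (rule cinner_commute)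
  also have "\<dots> = cnj (cinner z x) + cnj (cinner z y)" by (simp add: cinner_add_right)
  also have "\<dots> = cinner x z + cinner y z" by (simp add: cinner_commute[of x z] cinner_commute[of y z])
  finally show ?thesis .
qed

lemma cinner_scaleC_left: "cinner (scaleC a (x::'a::complex_inner)) y = cnj a * cinner x y"
proof -
  have "cinner (scaleC a x) y = cnj (cinner y (scaleC a x))" by (rule cinner_commute)
  also have "\<dots> = cnj a * cnj (cinner y x)" by (simp add: cinner_scaleC_right)
  also have "\<dots> = cnj a * cinner x y" by (simp add: cinner_commute[of x y])
  finally show ?thesis .
qed

lemma cinner_zero_right [simp]: "cinner (x::'a::complex_inner) 0 = 0"
  using cinner_scaleC_right[of x 0 0] by simp

lemma cinner_zero_left [simp]: "cinner 0 (x::'a::complex_inner) = 0"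
  using cinner_scaleC_left[of 0 0 x] by simp

lemma cinner_minus_right: "cinner (x::'a::complex_inner) (- y) = - cinner x y"
  using cinner_scaleC_right[of x "-1" y] by (simp add: scaleC_minus1)

lemma cinner_minus_left: "cinner (- (x::'a::complex_inner)) y = - cinner x y"
  using cinner_scaleC_left[of "-1" x y] by (simp add: scaleC_minus1)

lemma cinner_diff_right: "cinner (x::'a::complex_inner) (y - z) = cinner x y - cinner x z"
  using cinner_add_right[of x y "- z"] by (simp only: diff_conv_add_uminus cinner_minus_right)

lemma cinner_diff_left: "cinner ((x::'a::complex_inner) - y) z = cinner x z - cinner y z"
  using cinner_add_left[of x "- y" z] by (simp only: diff_conv_add_uminus cinner_minus_left)

lemma cinner_scaleR_right: "cinner (x::'a::complex_inner) (scaleR r y) = of_real r * cinner x y"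
  by (simp add: scaleR_scaleC cinner_scaleC_right)

lemma cinner_scaleR_left: "cinner (scaleR r (x::'a::complex_inner)) y = of_real r * cinner x y"
  by (simp add: scaleR_scaleC cinner_scaleC_left)

lemma cinner_self: "cinner (x::'a::complex_inner) x = complex_of_real ((norm x)\<^sup>2)"
proof -
  have "Im (cinner x x) = 0" "0 \<le> Re (cinner x x)" using cinner_self_nonneg by auto
  moreover have "(norm x)\<^sup>2 = Re (cinner x x)"
    using norm_eq_sqrt_cinner[of x] \<open>0 \<le> Re (cinner x x)\<close> by simp
  ultimately show ?thesis by (simp add: complex_eq_iff)
qed

lemma cinner_eq_ext: "(\<And>g. cinner g (x::'a::complex_inner) = cinner g y) \<Longrightarrow> x = y"
proof -
  assume "\<And>g. cinner g x = cinner g y"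
  then have "cinner (x - y) (x - y) = 0" by (simp add: cinner_diff_right)
  then show "x = y" using cinner_self_zero[of "x - y"] by simp
qed




lemma quad_discr:
  fixes a b c :: real
  assumes "\<And>t. 0 \<le> a - 2 * t * b + t\<^sup>2 * c" "0 \<le> c"
  shows "b\<^sup>2 \<le> a * c"
proof (cases "c = 0")
  case True
  have "b = 0"
  proof (rule ccontr)
    assume b: "b \<noteq> 0"
    have "0 \<le> a - 2 * ((a + 1) / (2 * b)) * b + ((a + 1) / (2 * b))\<^sup>2 * c" by (rule assms(1))
    moreover have "2 * ((a + 1) / (2 * b)) * b = a + 1" using b by simp
    ultimately show False using True by simp
  qed
  then show ?thesis using True by simp
next
  case False
  then have c: "c > 0" using assms(2) by simp
  have "0 \<le> a - 2 * (b / c) * b + (b / c)\<^sup>2 * c" by (rule assms(1))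
  moreover have "(b / c)\<^sup>2 * c = b * b / c" using c by (simp add: power2_eq_square)
  moreover have "2 * (b / c) * b = 2 * (b * b / c)" by simp
  ultimately have "0 \<le> a - b * b / c" by simp
  then have "0 \<le> (a - b * b / c) * c" using c by simp
  moreover have "(a - b * b / c) * c = a * c - b * b" using c by (simp add: algebra_simps)
  ultimately show ?thesis by (simp add: power2_eq_square)
qed

lemma unit_rot:
  fixes w :: complex
  assumes "w \<noteq> 0"
  obtains u where "u * w = complex_of_real (cmod w)" "cnj u * u = 1"
proof -
  define u where "u = cnj w / complex_of_real (cmod w)"
  have nz: "complex_of_real (cmod w) \<noteq> 0" using assms by simp
  have "cnj w * w = complex_of_real ((cmod w)\<^sup>2)" using complex_norm_square[of w] by (simp add: mult.commute)
  then have 1: "u * w = complex_of_real (cmod w)"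
    unfolding u_def using nz by (simp add: field_simps power2_eq_square)
  have "cnj u * u = (w * cnj w) / (complex_of_real (cmod w) * complex_of_real (cmod w))"
    unfolding u_def by simp
  also have "w * cnj w = complex_of_real ((cmod w)\<^sup>2)" using complex_norm_square[of w] by simp
  finally have 2: "cnj u * u = 1" using nz by (simp add: power2_eq_square)
  show ?thesis using 1 2 that by blast
qed

lemma generic_CS:
  fixes F :: "'v::complex_vector \<Rightarrow> 'v \<Rightarrow> complex"
  assumes add: "\<And>x y z. F x (y + z) = F x y + F x z"
    and sc: "\<And>x a y. F x (scaleC a y) = a * F x y"
    and herm: "\<And>x y. F x y = cnj (F y x)"
    and pos: "\<And>x. 0 \<le> Re (F x x)"
  shows "(cmod (F x y))\<^sup>2 \<le> Re (F x x) * Re (F y y)"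
proof -
  have real: "Im (F z z) = 0" for z
  proof -
    have "Im (F z z) = Im (cnj (F z z))" using herm[of z z] by simp
    then show ?thesis by simp
  qed
  have addl: "F (x + y) z = F x z + F y z" for x y z
  proof -
    have "F (x + y) z = cnj (F z x + F z y)" using herm[of "x + y" z] add[of z x y] by simp
    also have "\<dots> = F x z + F y z" using herm[of x z] herm[of y z] by simp
    finally show ?thesis .
  qed
  have scl: "F (scaleC a x) z = cnj a * F x z" for a x z
  proof -
    have "F (scaleC a x) z = cnj (a * F z x)" using herm[of "scaleC a x" z] sc[of z a x] by simp
    also have "\<dots> = cnj a * F x z" using herm[of x z] by simp
    finally show ?thesis .
  qed
  have diffr: "F x (y - z) = F x y - F x z" for x y z
  proof -
    have "F x (y - z) = F x (y + scaleC (-1) z)" by (simp add: scaleC_minus1)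
    also have "\<dots> = F x y - F x z" by (simp only: add sc) simp
    finally show ?thesis .
  qed
  have diffl: "F (y - z) x = F y x - F z x" for x y z
  proof -
    have "F (y - z) x = F (y + scaleC (-1) z) x" by (simp add: scaleC_minus1)
    also have "\<dots> = F y x - F z x" by (simp only: addl scl) simp
    finally show ?thesis .
  qed
  define w where "w = F x y"
  show ?thesis
  proof (cases "w = 0")
    case True then show ?thesis using pos[of x] pos[of y] by (simp add: w_def)
  next
    case False
    obtain u where uw: "u * w = complex_of_real (cmod w)" and uu: "cnj u * u = 1"
      using unit_rot[OF False] by blast
    have key: "0 \<le> Re (F x x) - 2 * t * cmod w + t\<^sup>2 * Re (F y y)" for t :: real
    proof -
      define c where "c = complex_of_real t * u"
      have 1: "F (x - scaleC c y) (x - scaleC c y) = F (x - scaleC c y) x - c * F (x - scaleC c y) y"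
        by (simp only: diffr sc)
      have 2: "F (x - scaleC c y) x = F x x - cnj c * F y x" by (simp only: diffl scl)
      have 3: "F (x - scaleC c y) y = F x y - cnj c * F y y" by (simp only: diffl scl)
      have fyx: "F y x = cnj w" using herm[of y x] w_def by simp
      have e1: "cnj c * cnj w = complex_of_real (t * cmod w)"
      proof -
        have "cnj c * cnj w = cnj (c * w)" by simp
        also have "c * w = complex_of_real t * (u * w)" unfolding c_def by (simp only: mult.assoc)
        also have "\<dots> = complex_of_real (t * cmod w)" using uw by simp
        finally show ?thesis by (simp only: complex_cnj_complex_of_real)
      qed
      have e2: "c * w = complex_of_real (t * cmod w)"
        unfolding c_def using uw by (simp add: mult.assoc)
      have e3: "c * cnj c = complex_of_real (t\<^sup>2)"
      proof -
        have "c * cnj c = complex_of_real t * complex_of_real t * (cnj u * u)"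
          unfolding c_def by (simp add: mult_ac)
        then show ?thesis using uu by (simp add: power2_eq_square)
      qed
      have "F (x - scaleC c y) (x - scaleC c y) = F x x - cnj c * cnj w - (c * w - c * cnj c * F y y)"
        using 1 2 3 fyx w_def by (simp add: right_diff_distrib mult.assoc)
      also have "\<dots> = F x x - complex_of_real (2 * t * cmod w) + complex_of_real (t\<^sup>2) * F y y"
        using e1 e2 e3 by simp
      finally have "Re (F (x - scaleC c y) (x - scaleC c y)) = Re (F x x) - 2 * t * cmod w + t\<^sup>2 * Re (F y y)"
        using real[of y] by simp
      then show ?thesis using pos[of "x - scaleC c y"] by simp
    qed
    have "(cmod w)\<^sup>2 \<le> Re (F x x) * Re (F y y)"
      by (rule quad_discr[OF key pos])
    then show ?thesis by (simp add: w_def)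
  qed
qed

lemma cinner_CS: "cmod (cinner (x::'a::complex_inner) y) \<le> norm x * norm y"
proof -
  have "(cmod (cinner x y))\<^sup>2 \<le> Re (cinner x x) * Re (cinner y y)"
  proof (rule generic_CS)
    show "cinner x (y + z) = cinner x y + cinner x z" for x y z :: 'a by (rule cinner_add_right)
    show "cinner x (scaleC a y) = a * cinner x y" for x y :: 'a and a by (rule cinner_scaleC_right)
    show "cinner x y = cnj (cinner y x)" for x y :: 'a by (rule cinner_commute)
    show "0 \<le> Re (cinner x x)" for x :: 'a using cinner_self_nonneg by blast
  qed
  also have "\<dots> = (norm x * norm y)\<^sup>2" by (simp add: cinner_self power_mult_distrib)
  finally show ?thesis by (rule power2_le_imp_le) simp
qed



lemma unit_rot':
  fixes w :: complex
  obtains u where "u * w = complex_of_real (cmod w)" "cnj u * u = 1"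
proof (cases "w = 0")
  case True then show ?thesis using that[of 1] by simp
next
  case False then show ?thesis using unit_rot that by blast
qed

lemma norm_sq_cinner: "(norm (x::'a::complex_inner))\<^sup>2 = Re (cinner x x)"
  by (simp add: cinner_self)

lemma norm_scaleC_unit:
  assumes "cnj u * u = 1"
  shows "norm (scaleC u (x::'a::complex_inner)) = norm x"
proof -
  have "cinner (scaleC u x) (scaleC u x) = (cnj u * u) * cinner x x"
    by (simp add: cinner_scaleC_left cinner_scaleC_right mult.assoc)
  then show ?thesis using assms by (simp add: norm_eq_sqrt_cinner[of "scaleC u x"] norm_eq_sqrt_cinner[of x])
qed

lemma parallelogram:
  "(norm ((x::'a::complex_inner) + y))\<^sup>2 + (norm (x - y))\<^sup>2 = 2 * (norm x)\<^sup>2 + 2 * (norm y)\<^sup>2"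
proof -
  have "cinner (x + y) (x + y) = cinner x x + cinner x y + cinner y x + cinner y y"
    by (simp add: cinner_add_left cinner_add_right)
  moreover have "cinner (x - y) (x - y) = cinner x x - cinner x y - cinner y x + cinner y y"
    by (simp add: cinner_diff_left cinner_diff_right)
  ultimately show ?thesis by (simp add: norm_sq_cinner)
qed

lemma riesz:
  fixes \<phi> :: "'a::{complex_inner,complete_space} \<Rightarrow> complex"
  assumes add: "\<And>x y. \<phi> (x + y) = \<phi> x + \<phi> y" and sc: "\<And>a x. \<phi> (scaleC a x) = a * \<phi> x"
    and bd: "\<And>x. cmod (\<phi> x) \<le> K * norm x"
  shows "\<exists>w. \<forall>x. \<phi> x = cinner w x"
proof (cases "\<forall>x. \<phi> x = 0")
  case True then show ?thesis by (intro exI[of _ 0]) simp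
next
  case False
  then obtain x0 where x0: "\<phi> x0 \<noteq> 0" by auto
  have phi0: "\<phi> 0 = 0" using sc[of 0 0] by simp
  have scR: "\<phi> (scaleR r x) = complex_of_real r * \<phi> x" for r x by (simp add: scaleR_scaleC sc)
  have neg: "\<phi> (- x) = - \<phi> x" for x using sc[of "-1" x] by (simp add: scaleC_minus1)
  have diff: "\<phi> (x - y) = \<phi> x - \<phi> y" for x y using add[of x "- y"] neg[of y] by simp
  have lin: "bounded_linear \<phi>"
  proof (rule bounded_linear_intro[where K=K])
    show "\<phi> (x + y) = \<phi> x + \<phi> y" for x y by (rule add)
    show "\<phi> (scaleR r x) = scaleR r (\<phi> x)" for r x by (simp add: scR scaleR_conv_of_real)
    show "norm (\<phi> x) \<le> norm x * K" for x using bd[of x] by (simp add: mult.commute)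
  qed
  have x0nz: "x0 \<noteq> 0" using x0 phi0 by auto
  have Kpos: "K > 0"
  proof -
    have "0 < cmod (\<phi> x0)" using x0 by simp
    also have "\<dots> \<le> K * norm x0" by (rule bd)
    finally show ?thesis using x0nz by (simp add: zero_less_mult_iff)
  qed
  define B where "B = (\<lambda>x. cmod (\<phi> x)) ` {x. norm x \<le> 1}"
  define L where "L = Sup B"
  have bdd: "bdd_above B" unfolding B_def
  proof (rule bdd_aboveI2[where M=K])
    fix x :: 'a assume "x \<in> {x. norm x \<le> 1}"
    then have "K * norm x \<le> K * 1" using Kpos by (intro mult_left_mono) auto
    then show "cmod (\<phi> x) \<le> K" using bd[of x] by simp
  qed
  have Bne: "B \<noteq> {}"
  proof -
    have "(0::'a) \<in> {x. norm x \<le> 1}" by simp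
    then show ?thesis unfolding B_def by blast
  qed
  have leL: "norm x \<le> 1 \<Longrightarrow> cmod (\<phi> x) \<le> L" for x
    unfolding L_def by (rule cSup_upper[OF _ bdd]) (auto simp: B_def)
  have bound: "cmod (\<phi> x) \<le> L * norm x" for x
  proof (cases "x = 0")
    case True then show ?thesis using phi0 by simp
  next
    case False
    then have nx: "norm x > 0" by simp
    have "cmod (\<phi> (scaleR (1 / norm x) x)) \<le> L" by (rule leL) (use nx in simp)
    moreover have "cmod (\<phi> (scaleR (1 / norm x) x)) = cmod (\<phi> x) / norm x"
      using nx by (simp add: scR norm_mult norm_divide)
    ultimately show ?thesis using nx by (simp add: divide_le_eq mult.commute)
  qed
  have Lpos: "L > 0"
  proof -
    have "0 < cmod (\<phi> x0)" using x0 by simp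
    also have "\<dots> \<le> L * norm x0" by (rule bound)
    finally show ?thesis using x0nz by (simp add: zero_less_mult_iff)
  qed
  have approx: "\<exists>x. norm x \<le> 1 \<and> Im (\<phi> x) = 0 \<and> L - inverse (real (Suc n)) < Re (\<phi> x)" for n
  proof -
    have "L - inverse (real (Suc n)) < Sup B" unfolding L_def[symmetric] by simp
    then obtain b where "b \<in> B" "L - inverse (real (Suc n)) < b" using less_cSupE[OF _ Bne] by blast
    then obtain y where y: "norm y \<le> 1" "L - inverse (real (Suc n)) < cmod (\<phi> y)"
      unfolding B_def by auto
    obtain u where u: "u * \<phi> y = complex_of_real (cmod (\<phi> y))" "cnj u * u = 1"
      using unit_rot' by blast
    have "norm (scaleC u y) = norm y" by (rule norm_scaleC_unit[OF u(2)])
    then have "norm (scaleC u y) \<le> 1" using y(1) by linarith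
    moreover have "\<phi> (scaleC u y) = complex_of_real (cmod (\<phi> y))" using u(1) sc by simp
    ultimately show ?thesis using y(2) by (intro exI[of _ "scaleC u y"]) simp
  qed
  then have "\<forall>n. \<exists>x. norm x \<le> 1 \<and> Im (\<phi> x) = 0 \<and> L - inverse (real (Suc n)) < Re (\<phi> x)"
    by blast
  then have "\<exists>X. \<forall>n. norm (X n) \<le> 1 \<and> Im (\<phi> (X n)) = 0 \<and> L - inverse (real (Suc n)) < Re (\<phi> (X n))"
    by (rule choice)
  then obtain X where XX: "\<forall>n. norm (X n) \<le> 1 \<and> Im (\<phi> (X n)) = 0 \<and> L - inverse (real (Suc n)) < Re (\<phi> (X n))"
    by blast
  have X: "\<And>n. norm (X n) \<le> 1" "\<And>n. Im (\<phi> (X n)) = 0"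
      "\<And>n. L - inverse (real (Suc n)) < Re (\<phi> (X n))"
    using XX by auto
  have ReL: "Re (\<phi> (X n)) \<le> L" for n
  proof -
    have "Re (\<phi> (X n)) \<le> cmod (\<phi> (X n))" by (rule complex_Re_le_cmod)
    also have "\<dots> \<le> L" by (rule leL[OF X(1)])
    finally show ?thesis .
  qed
  have cauchy: "Cauchy X"
  proof (rule metric_CauchyI)
    fix e :: real assume e: "e > 0"
    obtain N :: nat where N: "8 / (L * e\<^sup>2) < real N" using reals_Archimedean2 by blast
    define \<eta> where "\<eta> = 2 / ((real N + 1) * L)"
    have eta: "4 * \<eta> < e\<^sup>2"
    proof -
      have pos: "L * e\<^sup>2 > 0" using Lpos e by simp
      have "8 < real N * (L * e\<^sup>2)" using N pos by (simp add: divide_less_eq)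
      then have "8 < (real N + 1) * L * e\<^sup>2" using pos by (simp add: algebra_simps)
      moreover have "4 * \<eta> = 8 / ((real N + 1) * L)" unfolding \<eta>_def by simp
      ultimately show ?thesis using Lpos by (simp add: divide_less_eq mult.commute mult.left_commute)
    qed
    have "dist (X m) (X n) < e" if m: "m \<ge> N" and n: "n \<ge> N" for m n
    proof -
      have im: "inverse (real (Suc m)) \<le> inverse (real N + 1)" using m by (simp add: le_imp_inverse_le)
      have in': "inverse (real (Suc n)) \<le> inverse (real N + 1)" using n by (simp add: le_imp_inverse_le)
      have "Re (\<phi> (X m + X n)) = Re (\<phi> (X m)) + Re (\<phi> (X n))" by (simp add: add)
      then have "2 * L - 2 * inverse (real N + 1) < Re (\<phi> (X m + X n))"
        using X(3)[of m] X(3)[of n] im in' by linarith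
      also have "\<dots> \<le> cmod (\<phi> (X m + X n))" by (rule complex_Re_le_cmod)
      also have "\<dots> \<le> L * norm (X m + X n)" by (rule bound)
      finally have "2 * L - 2 * inverse (real N + 1) < L * norm (X m + X n)" .
      then have "(2 * L - 2 * inverse (real N + 1)) / L < (L * norm (X m + X n)) / L"
        by (rule divide_strict_right_mono[OF _ Lpos])
      moreover have "(2 * L - 2 * inverse (real N + 1)) / L = 2 - \<eta>"
      proof -
        have n1: "real N + 1 > 0" by simp
        have "(2 * L - 2 * inverse (real N + 1)) / L = 2 * L / L - 2 * inverse (real N + 1) / L"
          by (rule diff_divide_distrib)
        also have "2 * L / L = 2" using Lpos by simp
        also have "2 * inverse (real N + 1) / L = 2 / ((real N + 1) * L)"
          using n1 Lpos by (simp add: divide_inverse inverse_mult_distrib)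
        finally show ?thesis unfolding \<eta>_def .
      qed
      moreover have "(L * norm (X m + X n)) / L = norm (X m + X n)" using Lpos by simp
      ultimately have s: "2 - \<eta> < norm (X m + X n)" by simp
      have par: "(norm (X m - X n))\<^sup>2 \<le> 4 - (norm (X m + X n))\<^sup>2"
      proof -
        have "(norm (X m))\<^sup>2 \<le> 1" "(norm (X n))\<^sup>2 \<le> 1"
          using X(1)[of m] X(1)[of n] by (simp_all add: power_le_one)
        then show ?thesis using parallelogram[of "X m" "X n"] by simp
      qed
      have "4 - (norm (X m + X n))\<^sup>2 \<le> 4 * \<eta>"
      proof (cases "norm (X m + X n) \<ge> 2")
        case True
        then have "4 \<le> (norm (X m + X n))\<^sup>2" using power_mono[of 2 "norm (X m + X n)" 2] by simp
        moreover have "\<eta> \<ge> 0" unfolding \<eta>_def using Lpos by simp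
        ultimately show ?thesis by simp
      next
        case False
        have "4 - (norm (X m + X n))\<^sup>2 = (2 - norm (X m + X n)) * (2 + norm (X m + X n))"
          by (simp add: power2_eq_square algebra_simps)
        also have "\<dots> \<le> \<eta> * 4"
          using s False by (intro mult_mono) auto
        finally show ?thesis by simp
      qed
      with par eta have "(norm (X m - X n))\<^sup>2 < e\<^sup>2" by simp
      then have "norm (X m - X n) < e" using e by (simp add: power_less_imp_less_base)
      then show ?thesis by (simp add: dist_norm)
    qed
    then show "\<exists>M. \<forall>m\<ge>M. \<forall>n\<ge>M. dist (X m) (X n) < e" by blast
  qed
  then obtain u where Xu: "X \<longlonglongrightarrow> u" using Cauchy_convergent_iff convergent_def by blast
  have nu: "norm u \<le> 1"
    using LIMSEQ_le_const2[OF tendsto_norm[OF Xu]] X(1) by blast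
  have phiX: "(\<lambda>n. \<phi> (X n)) \<longlonglongrightarrow> \<phi> u" by (rule bounded_linear.tendsto[OF lin Xu])
  have ImU: "Im (\<phi> u) = 0"
  proof -
    have "(\<lambda>n. Im (\<phi> (X n))) \<longlonglongrightarrow> Im (\<phi> u)" by (rule tendsto_Im[OF phiX])
    then have "(\<lambda>n. 0::real) \<longlonglongrightarrow> Im (\<phi> u)" using X(2) by simp
    from LIMSEQ_unique[OF this tendsto_const] show ?thesis by simp
  qed
  have ReU: "Re (\<phi> u) = L"
  proof (rule antisym)
    have R: "(\<lambda>n. Re (\<phi> (X n))) \<longlonglongrightarrow> Re (\<phi> u)" by (rule tendsto_Re[OF phiX])
    show "Re (\<phi> u) \<le> L" using LIMSEQ_le_const2[OF R] ReL by blast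
    have "(\<lambda>n. L - inverse (real (Suc n))) \<longlonglongrightarrow> L - 0"
      by (intro tendsto_diff tendsto_const LIMSEQ_inverse_real_of_nat)
    then have lim1: "(\<lambda>n. L - inverse (real (Suc n))) \<longlonglongrightarrow> L" by simp
    show "L \<le> Re (\<phi> u)"
      by (rule LIMSEQ_le[OF lim1 R]) (use X(3) less_imp_le in blast)
  qed
  have phiu: "\<phi> u = complex_of_real L" using ImU ReU by (simp add: complex_eq_iff)
  have nu1: "norm u = 1"
  proof -
    have "L \<le> L * norm u" using bound[of u] phiu Lpos by simp
    then have "1 \<le> norm u" using Lpos by simp
    then show ?thesis using nu by simp
  qed
  have uu: "cinner u u = 1" using nu1 by (simp add: cinner_self)
  have orth: "cinner u v = 0" if v: "\<phi> v = 0" for v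
  proof -
    define \<beta> where "\<beta> = cinner u v"
    have bb: "cnj \<beta> * \<beta> = complex_of_real ((cmod \<beta>)\<^sup>2)"
      using complex_norm_square[of \<beta>] by (simp add: mult.commute)
    have key: "0 \<le> 0 - 2 * s * (cmod \<beta>)\<^sup>2 + s\<^sup>2 * ((cmod \<beta>)\<^sup>2 * (norm v)\<^sup>2)" for s :: real
    proof -
      define t where "t = - complex_of_real s * cnj \<beta>"
      have "\<phi> (u + scaleC t v) = complex_of_real L" using v phiu by (simp add: add sc)
      then have "L \<le> L * norm (u + scaleC t v)" using bound[of "u + scaleC t v"] by simp
      then have "1 \<le> norm (u + scaleC t v)" using Lpos by simp
      then have "1 \<le> (norm (u + scaleC t v))\<^sup>2" by (simp add: one_le_power)
      also have "(norm (u + scaleC t v))\<^sup>2 = Re (cinner (u + scaleC t v) (u + scaleC t v))"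
        by (rule norm_sq_cinner)
      also have "cinner (u + scaleC t v) (u + scaleC t v) =
          cinner u u + t * \<beta> + cnj (t * \<beta>) + (cnj t * t) * cinner v v"
      proof -
        have "cinner (u + scaleC t v) (u + scaleC t v) =
          (cinner u u + t * cinner u v) + (cnj t * cinner v u + cnj t * (t * cinner v v))"
          by (simp only: cinner_add_left cinner_add_right cinner_scaleC_left cinner_scaleC_right distrib_left)
            (simp add: algebra_simps)
        moreover have "cinner v u = cnj \<beta>" unfolding \<beta>_def by (rule cinner_commute)
        ultimately show ?thesis unfolding \<beta>_def by (simp add: mult.assoc)
      qed
      also have "t * \<beta> = - complex_of_real (s * (cmod \<beta>)\<^sup>2)"
        unfolding t_def using bb by (simp add: mult.assoc)
      also have "cnj t * t = complex_of_real (s\<^sup>2 * (cmod \<beta>)\<^sup>2)"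
      proof -
        have "cnj t * t = complex_of_real s * complex_of_real s * (cnj \<beta> * \<beta>)"
          unfolding t_def by (simp add: mult_ac)
        then show ?thesis using bb by (simp add: power2_eq_square)
      qed
      finally have "1 \<le> 1 - 2 * s * (cmod \<beta>)\<^sup>2 + s\<^sup>2 * (cmod \<beta>)\<^sup>2 * (norm v)\<^sup>2"
        using uu nu1 by (simp add: cinner_self)
      then show ?thesis by (simp add: algebra_simps)
    qed
    have "((cmod \<beta>)\<^sup>2)\<^sup>2 \<le> 0 * ((cmod \<beta>)\<^sup>2 * (norm v)\<^sup>2)"
      by (rule quad_discr[OF key]) simp
    then show ?thesis unfolding \<beta>_def by simp
  qed
  have "\<phi> x = cinner (scaleR L u) x" for x
  proof -
    define v where "v = scaleC (complex_of_real L) x - scaleC (\<phi> x) u"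
    have "\<phi> v = 0" unfolding v_def using phiu by (simp add: diff sc)
    then have "cinner u v = 0" by (rule orth)
    then have "complex_of_real L * cinner u x - \<phi> x = 0"
      unfolding v_def using uu by (simp add: cinner_diff_right cinner_scaleC_right)
    then show ?thesis by (simp add: cinner_scaleR_left)
  qed
  then show ?thesis by blast
qed




lemma bclin_add: "bounded_clinear f \<Longrightarrow> f (x + y) = f x + f y"
  by (simp add: bounded_clinear_def clinear_def)

lemma bclin_scaleC: "bounded_clinear f \<Longrightarrow> f (scaleC a x) = scaleC a (f x)"
  by (simp add: bounded_clinear_def clinear_def)

lemma bclin_linear:
  assumes "bounded_clinear (f :: 'a::{complex_vector,real_normed_vector} \<Rightarrow> 'b::{complex_vector,real_normed_vector})"
  shows "bounded_linear f"
proof -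
  obtain K where K: "\<forall>x. norm (f x) \<le> norm x * K" using assms by (auto simp: bounded_clinear_def)
  show ?thesis
  proof (rule bounded_linear_intro[where K=K])
    show "f (x + y) = f x + f y" for x y by (rule bclin_add[OF assms])
    show "f (scaleR r x) = scaleR r (f x)" for r x
      by (simp add: scaleR_scaleC bclin_scaleC[OF assms])
    show "norm (f x) \<le> norm x * K" for x using K by blast
  qed
qed

lemma bclin_diff: "bounded_clinear f \<Longrightarrow> f (x - y) = f x - f y"
  using bclin_linear linear_diff bounded_linear.linear by blast

lemma bclin_scaleR: "bounded_clinear f \<Longrightarrow> f (scaleR r x) = scaleR r (f x)"
  using bclin_linear bounded_linear.linear linear_scale by blast

lemma adjoint_exists:
  fixes f :: "'a::{complex_inner,complete_space} \<Rightarrow> 'a"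
  assumes f: "bounded_clinear f"
  shows "\<exists>g. \<forall>x y. cinner (f x) y = cinner x (g y)"
proof -
  obtain K where K: "\<forall>x. norm (f x) \<le> norm x * K" using f by (auto simp: bounded_clinear_def)
  have "\<forall>y. \<exists>w. \<forall>x. cinner y (f x) = cinner w x"
  proof
    fix y :: 'a
    show "\<exists>w. \<forall>x. cinner y (f x) = cinner w x"
    proof (rule riesz[where K="norm y * K"])
      show "cinner y (f (x + z)) = cinner y (f x) + cinner y (f z)" for x z
        by (simp add: bclin_add[OF f] cinner_add_right)
      show "cinner y (f (scaleC a x)) = a * cinner y (f x)" for a x
        by (simp add: bclin_scaleC[OF f] cinner_scaleC_right)
      show "cmod (cinner y (f x)) \<le> norm y * K * norm x" for x
      proof -
        have "cmod (cinner y (f x)) \<le> norm y * norm (f x)" by (rule cinner_CS)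
        also have "\<dots> \<le> norm y * (norm x * K)" using K by (intro mult_left_mono) auto
        finally show ?thesis by (simp add: mult_ac)
      qed
    qed
  qed
  then have "\<exists>g. \<forall>y x. cinner y (f x) = cinner (g y) x" by (rule choice)
  then obtain g where g: "\<forall>y x. cinner y (f x) = cinner (g y) x" by blast
  have "cinner (f x) y = cinner x (g y)" for x y
  proof -
    have "cinner (f x) y = cnj (cinner y (f x))" by (rule cinner_commute)
    also have "\<dots> = cnj (cinner (g y) x)" using g by simp
    also have "\<dots> = cinner x (g y)" by (simp add: cinner_commute[of x "g y"])
    finally show ?thesis .
  qed
  then show ?thesis by blast
qed

lemma cadjoint_rel:
  fixes f :: "'a::{complex_inner,complete_space} \<Rightarrow> 'a"
  assumes "bounded_clinear f"
  shows "cinner (f x) y = cinner x (cadjoint f y)"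
proof -
  have "\<forall>x y. cinner (f x) y = cinner x (cadjoint f y)"
    unfolding cadjoint_def by (rule someI_ex[OF adjoint_exists[OF assms]])
  then show ?thesis by blast
qed

lemma positive_herm:
  assumes p: "positive_op p"
  shows "cinner (p x) y = cinner x (p y)"
proof -
  have bp: "bounded_clinear p" using p by (simp add: positive_op_def)
  have realq: "Im (cinner z (p z)) = 0" for z using p by (simp add: positive_op_def)
  define \<alpha> where "\<alpha> = cinner x (p y)"
  define \<beta> where "\<beta> = cinner y (p x)"
  have e1: "cinner (x + y) (p (x + y)) = cinner x (p x) + cinner y (p y) + \<alpha> + \<beta>"
    unfolding \<alpha>_def \<beta>_def by (simp add: bclin_add[OF bp] cinner_add_left cinner_add_right)
  have e2: "cinner (x + scaleC \<i> y) (p (x + scaleC \<i> y)) =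
      cinner x (p x) + cinner y (p y) + \<i> * \<alpha> - \<i> * \<beta>"
    unfolding \<alpha>_def \<beta>_def
    by (simp add: bclin_add[OF bp] bclin_scaleC[OF bp] cinner_add_left cinner_add_right
        cinner_scaleC_left cinner_scaleC_right algebra_simps)
  have "Im (\<alpha> + \<beta>) = 0" using e1 realq[of "x + y"] realq[of x] realq[of y] by simp
  moreover have "Re (\<alpha> - \<beta>) = 0" using e2 realq[of "x + scaleC \<i> y"] realq[of x] realq[of y] by simp
  ultimately have "\<alpha> = cnj \<beta>" by (simp add: complex_eq_iff)
  moreover have "cinner (p x) y = cnj \<beta>" unfolding \<beta>_def by (rule cinner_commute)
  ultimately show ?thesis unfolding \<alpha>_def by simp
qed

lemma positive_CS:
  assumes p: "positive_op p"
  shows "(cmod (cinner x (p y)))\<^sup>2 \<le> Re (cinner x (p x)) * Re (cinner y (p y))"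
proof -
  have bp: "bounded_clinear p" using p by (simp add: positive_op_def)
  show ?thesis
  proof (rule generic_CS[where F="\<lambda>x y. cinner x (p y)"])
    show "cinner x (p (y + z)) = cinner x (p y) + cinner x (p z)" for x y z
      by (simp add: bclin_add[OF bp] cinner_add_right)
    show "cinner x (p (scaleC a y)) = a * cinner x (p y)" for x a y
      by (simp add: bclin_scaleC[OF bp] cinner_scaleC_right)
    show "cinner x (p y) = cnj (cinner y (p x))" for x y
      using positive_herm[OF p, of y x] cinner_commute[of x "p y"] by simp
    show "0 \<le> Re (cinner x (p x))" for x using p by (simp add: positive_op_def)
  qed
qed

lemma positive_zero_form:
  assumes p: "positive_op p" and z: "Re (cinner y (p y)) = 0"
  shows "p y = 0"
proof -
  have "(cmod (cinner (p y) (p y)))\<^sup>2 \<le> Re (cinner (p y) (p (p y))) * Re (cinner y (p y))"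
    by (rule positive_CS[OF p])
  then have "cmod (cinner (p y) (p y)) = 0" using z by simp
  then show ?thesis using cinner_self_zero[of "p y"] by simp
qed

lemma positive_norm_bound:
  assumes p: "positive_op p" and M: "\<And>x. norm (p x) \<le> M * norm x" and M0: "0 \<le> M"
  shows "(norm (p z))\<^sup>2 \<le> M * Re (cinner z (p z))"
proof -
  have "(cmod (cinner (p z) (p z)))\<^sup>2 \<le> Re (cinner (p z) (p (p z))) * Re (cinner z (p z))"
    by (rule positive_CS[OF p])
  moreover have "cmod (cinner (p z) (p z)) = (norm (p z))\<^sup>2" by (simp only: cinner_self norm_of_real) simp
  moreover have "Re (cinner (p z) (p (p z))) \<le> M * (norm (p z))\<^sup>2"
  proof -
    have "Re (cinner (p z) (p (p z))) \<le> cmod (cinner (p z) (p (p z)))" by (rule complex_Re_le_cmod)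
    also have "\<dots> \<le> norm (p z) * norm (p (p z))" by (rule cinner_CS)
    also have "\<dots> \<le> norm (p z) * (M * norm (p z))" by (intro mult_left_mono M) simp
    finally show ?thesis by (simp add: power2_eq_square mult_ac)
  qed
  moreover have "0 \<le> Re (cinner z (p z))" using p by (simp add: positive_op_def)
  ultimately have "((norm (p z))\<^sup>2)\<^sup>2 \<le> M * (norm (p z))\<^sup>2 * Re (cinner z (p z))"
    by (metis (no_types, opaque_lifting) mult_right_mono order_trans)
  then have "(norm (p z))\<^sup>2 * (norm (p z))\<^sup>2 \<le> (norm (p z))\<^sup>2 * (M * Re (cinner z (p z)))"
    by (simp add: power2_eq_square mult_ac)
  show ?thesis
  proof (cases "norm (p z) = 0")
    case True
    have "0 \<le> Re (cinner z (p z))" using p by (simp add: positive_op_def)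
    then show ?thesis using True M0 by simp
  next
    case False
    then have "0 < (norm (p z))\<^sup>2" by simp
    with \<open>(norm (p z))\<^sup>2 * (norm (p z))\<^sup>2 \<le> (norm (p z))\<^sup>2 * (M * Re (cinner z (p z)))\<close>
    show ?thesis by (rule mult_left_le_imp_le)
  qed
qed




lemma positive_pos: "positive_op p \<Longrightarrow> 0 \<le> Re (cinner z (p z))"
  by (simp add: positive_op_def)

lemma bclin_bound0:
  assumes "bounded_clinear f"
  obtains M where "0 \<le> M" "\<And>x. norm (f x) \<le> M * norm x"
proof -
  obtain K where "0 \<le> K" "\<forall>x. norm (f x) \<le> norm x * K"
    using bounded_linear.nonneg_bounded[OF bclin_linear[OF assms]] by blast
  then show ?thesis using that[of K] by (simp add: mult.commute)
qed

lemma contraction_step: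
  assumes P: "positive_op P" and M0: "0 \<le> M" and M: "\<And>x. norm (P x) \<le> M * norm x"
    and s0: "0 \<le> s" and sM: "s * M \<le> 1"
  shows "norm (w - scaleR s (P w)) \<le> norm w"
proof -
  define v where "v = scaleR s (P w)"
  define R where "R = Re (cinner w (P w))"
  have q: "Re (cinner (P w) w) = R"
    unfolding R_def using cinner_commute[of "P w" w] by simp
  have c1: "cinner (w - v) (w - v) = cinner w w - cinner w v - (cinner v w - cinner v v)"
    by (simp only: cinner_diff_left cinner_diff_right) (simp add: algebra_simps)
  have c2: "cinner w v = complex_of_real s * cinner w (P w)" unfolding v_def by (rule cinner_scaleR_right)
  have c3: "cinner v w = complex_of_real s * cinner (P w) w" unfolding v_def by (rule cinner_scaleR_left)
  have c4: "cinner v v = complex_of_real s * (complex_of_real s * cinner (P w) (P w))"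
    unfolding v_def by (simp only: cinner_scaleR_left cinner_scaleR_right)
  have r: "Re (cinner (w - v) (w - v)) = Re (cinner w w) - s * R - (s * Re (cinner (P w) w) - s * (s * Re (cinner (P w) (P w))))"
    unfolding c1 c2 c3 c4 R_def by simp
  have "(norm (w - v))\<^sup>2 = (norm w)\<^sup>2 - 2 * s * R + s * s * (norm (P w))\<^sup>2"
    using r q norm_sq_cinner[of "w - v"] norm_sq_cinner[of w] norm_sq_cinner[of "P w"]
    by (simp add: algebra_simps)
  moreover have "s * s * (norm (P w))\<^sup>2 \<le> 2 * s * R"
  proof -
    have R0: "0 \<le> R" unfolding R_def using P by (simp add: positive_op_def)
    have "(norm (P w))\<^sup>2 \<le> M * R" unfolding R_def by (rule positive_norm_bound[OF P M M0])
    then have "s * s * (norm (P w))\<^sup>2 \<le> s * s * (M * R)"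
      using s0 by (simp add: mult_left_mono)
    also have "s * s * (M * R) = s * ((s * M) * R)" by (simp add: mult_ac)
    also have "\<dots> \<le> s * (1 * R)"
      using sM s0 R0 by (intro mult_left_mono mult_right_mono) auto
    also have "\<dots> \<le> 2 * s * R" using s0 R0 by simp
    finally show ?thesis .
  qed
  ultimately have "(norm (w - v))\<^sup>2 \<le> (norm w)\<^sup>2" by simp
  then have "norm (w - v) \<le> norm w" by (rule power2_le_imp_le) simp
  then show ?thesis unfolding v_def .
qed

lemma growth_step:
  assumes b: "positive_op b" and s0: "0 \<le> s"
  shows "(norm (u + scaleR s (b u)))\<^sup>2 \<ge> (norm u)\<^sup>2 + 2 * s * Re (cinner u (b u))"
    and "Re (cinner (u + scaleR s (b u)) (b (u + scaleR s (b u)))) \<ge> Re (cinner u (b u))"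
proof -
  have bb: "bounded_clinear b" using b by (simp add: positive_op_def)
  define v where "v = scaleR s (b u)"
  define R where "R = Re (cinner u (b u))"
  have q: "Re (cinner (b u) u) = R"
    unfolding R_def using cinner_commute[of "b u" u] by simp
  have c1: "cinner (u + v) (u + v) = cinner u u + cinner u v + (cinner v u + cinner v v)"
    by (simp only: cinner_add_left cinner_add_right) (simp add: algebra_simps)
  have c2: "cinner u v = complex_of_real s * cinner u (b u)" unfolding v_def by (rule cinner_scaleR_right)
  have c3: "cinner v u = complex_of_real s * cinner (b u) u" unfolding v_def by (rule cinner_scaleR_left)
  have c4: "cinner v v = complex_of_real s * (complex_of_real s * cinner (b u) (b u))"
    unfolding v_def by (simp only: cinner_scaleR_left cinner_scaleR_right)
  have r: "Re (cinner (u + v) (u + v)) = Re (cinner u u) + s * R + (s * Re (cinner (b u) u) + s * (s * Re (cinner (b u) (b u))))"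
    unfolding c1 c2 c3 c4 R_def by simp
  have "(norm (u + v))\<^sup>2 = (norm u)\<^sup>2 + 2 * s * R + s * s * (norm (b u))\<^sup>2"
    using r q norm_sq_cinner[of "u + v"] norm_sq_cinner[of u] norm_sq_cinner[of "b u"]
    by (simp add: algebra_simps)
  moreover have "0 \<le> s * s * (norm (b u))\<^sup>2" using s0 by simp
  ultimately show "(norm (u + scaleR s (b u)))\<^sup>2 \<ge> (norm u)\<^sup>2 + 2 * s * Re (cinner u (b u))"
    unfolding v_def R_def by simp
  have bv: "b (u + v) = b u + scaleR s (b (b u))"
    unfolding v_def by (simp only: bclin_add[OF bb] bclin_scaleR[OF bb])
  have d1: "cinner (u + v) (b u + scaleR s (b (b u))) =
      cinner u (b u) + cinner u (scaleR s (b (b u))) + (cinner v (b u) + cinner v (scaleR s (b (b u))))"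
    by (simp only: cinner_add_left cinner_add_right) (simp add: algebra_simps)
  have d2: "cinner u (scaleR s (b (b u))) = complex_of_real s * cinner u (b (b u))" by (rule cinner_scaleR_right)
  have d3: "cinner v (b u) = complex_of_real s * cinner (b u) (b u)" unfolding v_def by (rule cinner_scaleR_left)
  have d4: "cinner v (scaleR s (b (b u))) = complex_of_real s * (complex_of_real s * cinner (b u) (b (b u)))"
    unfolding v_def by (simp only: cinner_scaleR_left cinner_scaleR_right)
  have h: "cinner u (b (b u)) = cinner (b u) (b u)" using positive_herm[OF b, of u "b u"] by simp
  have "Re (cinner (u + v) (b (u + v))) =
      R + s * Re (cinner (b u) (b u)) + (s * Re (cinner (b u) (b u)) + s * (s * Re (cinner (b u) (b (b u)))))"
    unfolding bv d1 d2 d3 d4 h R_def by simp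
  moreover have "0 \<le> s * (s * Re (cinner (b u) (b (b u))))"
    using s0 positive_pos[OF b, of "b u"] by simp
  moreover have "0 \<le> s * Re (cinner (b u) (b u))"
  proof -
    have "0 \<le> Re (cinner (b u) (b u))" using norm_sq_cinner[of "b u"] zero_le_power2[of "norm (b u)"] by linarith
    then show ?thesis using s0 by simp
  qed
  ultimately show "Re (cinner (u + scaleR s (b u)) (b (u + scaleR s (b u)))) \<ge> Re (cinner u (b u))"
    unfolding v_def R_def by linarith
qed

lemma sqrt_unique:
  fixes b P :: "'a::{complex_inner,complete_space} \<Rightarrow> 'a"
  assumes b: "positive_op b" and P: "positive_op P" and eq: "b \<circ> b = P \<circ> P"
  shows "b = P"
proof -
  have bb: "bounded_clinear b" using b by (simp add: positive_op_def)
  have bP: "bounded_clinear P" using P by (simp add: positive_op_def)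
  have bbx: "b (b x) = P (P x)" for x using fun_cong[OF eq, of x] by simp
  obtain Mb where Mb0: "0 \<le> Mb" and Mb: "\<And>x. norm (b x) \<le> Mb * norm x" using bclin_bound0[OF bb] by blast
  obtain MP where MP0: "0 \<le> MP" and MP: "\<And>x. norm (P x) \<le> MP * norm x" using bclin_bound0[OF bP] by blast
  define D where "D = (\<lambda>x. b x - P x)"
  have Dlin: "D (x - scaleR s y) = D x - scaleR s (D y)" for x y s
    unfolding D_def by (simp add: bclin_diff[OF bb] bclin_diff[OF bP] bclin_scaleR[OF bb] bclin_scaleR[OF bP]
        scaleR_diff_right algebra_simps)
  have Dbound: "norm (D x) \<le> (Mb + MP) * norm x" for x
  proof -
    have "norm (D x) \<le> norm (b x) + norm (P x)" unfolding D_def by (rule norm_triangle_ineq4)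
    also have "\<dots> \<le> Mb * norm x + MP * norm x" using Mb MP by (intro add_mono)
    finally show ?thesis by (simp add: algebra_simps)
  qed
  have bD: "b (D x) = - D (P x)" for x
    unfolding D_def by (simp add: bclin_diff[OF bb] bbx)
  define s where "s = 1 / (MP + 1)"
  have s0: "0 < s" unfolding s_def using MP0 by simp
  have sM: "s * MP \<le> 1" unfolding s_def using MP0 by (simp add: field_simps)
  define E where "E = (\<lambda>w. w - scaleR s (P w))"
  define G where "G = (\<lambda>w. w + scaleR s (b w))"
  have inter: "G (D w) = D (E w)" for w
    unfolding G_def E_def using Dlin[of w s "P w"] bD[of w] by simp
  have iter: "(G ^^ n) (D w) = D ((E ^^ n) w)" for n w
    by (induction n) (simp_all add: inter)
  have Ecomp: "norm ((E ^^ n) w) \<le> norm w" for n w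
  proof (induction n)
    case 0 then show ?case by simp
  next
    case (Suc n)
    have "norm ((E ^^ Suc n) w) = norm (E ((E ^^ n) w))" by simp
    also have "\<dots> \<le> norm ((E ^^ n) w)"
      unfolding E_def by (rule contraction_step[OF P MP0 MP less_imp_le[OF s0] sM])
    finally show ?case using Suc by simp
  qed
  have grow: "(norm ((G ^^ n) y))\<^sup>2 \<ge> (norm y)\<^sup>2 + 2 * real n * s * Re (cinner y (b y)) \<and>
      Re (cinner ((G ^^ n) y) (b ((G ^^ n) y))) \<ge> Re (cinner y (b y))" for n y
  proof (induction n)
    case 0 then show ?case by simp
  next
    case (Suc n)
    define u where "u = (G ^^ n) y"
    have gs: "(G ^^ Suc n) y = u + scaleR s (b u)" unfolding u_def G_def by simp
    have g1: "(norm (u + scaleR s (b u)))\<^sup>2 \<ge> (norm u)\<^sup>2 + 2 * s * Re (cinner u (b u))"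
      by (rule growth_step(1)[OF b less_imp_le[OF s0]])
    have g2: "Re (cinner (u + scaleR s (b u)) (b (u + scaleR s (b u)))) \<ge> Re (cinner u (b u))"
      by (rule growth_step(2)[OF b less_imp_le[OF s0]])
    have ih1: "(norm u)\<^sup>2 \<ge> (norm y)\<^sup>2 + 2 * real n * s * Re (cinner y (b y))"
      and ih2: "Re (cinner u (b u)) \<ge> Re (cinner y (b y))" using Suc unfolding u_def by auto
    have "2 * s * Re (cinner u (b u)) \<ge> 2 * s * Re (cinner y (b y))"
      using ih2 s0 by simp
    then show ?case unfolding gs using g1 g2 ih1 ih2 by (simp add: algebra_simps)
  qed
  have bDz: "b (D w) = 0" for w
  proof -
    define y where "y = D w"
    define C where "C = ((Mb + MP) * norm w)\<^sup>2"
    have bnd: "(norm y)\<^sup>2 + 2 * real n * s * Re (cinner y (b y)) \<le> C" for n :: nat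
    proof -
      have "(norm y)\<^sup>2 + 2 * real n * s * Re (cinner y (b y)) \<le> (norm ((G ^^ n) y))\<^sup>2"
        using grow[where n=n and y=y] by simp
      also have "norm ((G ^^ n) y) = norm (D ((E ^^ n) w))" unfolding y_def iter ..
      also have "norm (D ((E ^^ n) w)) \<le> (Mb + MP) * norm w"
      proof -
        have "norm (D ((E ^^ n) w)) \<le> (Mb + MP) * norm ((E ^^ n) w)" by (rule Dbound)
        also have "\<dots> \<le> (Mb + MP) * norm w" using Mb0 MP0 Ecomp by (intro mult_left_mono) auto
        finally show ?thesis .
      qed
      then have "(norm (D ((E ^^ n) w)))\<^sup>2 \<le> C" unfolding C_def by (intro power_mono) auto
      finally show ?thesis .
    qed
    have r0: "Re (cinner y (b y)) = 0"
    proof (rule ccontr)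
      assume "Re (cinner y (b y)) \<noteq> 0"
      then have pos: "Re (cinner y (b y)) > 0" using positive_pos[OF b, of y] by simp
      obtain n :: nat where n: "C / (2 * s * Re (cinner y (b y))) < real n"
        using reals_Archimedean2 by blast
      have q: "2 * s * Re (cinner y (b y)) > 0" using pos s0 by simp
      then have "C < real n * (2 * s * Re (cinner y (b y)))" using n by (simp add: divide_less_eq)
      moreover have "(norm y)\<^sup>2 + 2 * real n * s * Re (cinner y (b y)) \<le> C" by (rule bnd)
      moreover have "real n * (2 * s * Re (cinner y (b y))) = 2 * real n * s * Re (cinner y (b y))"
        by (simp add: mult_ac)
      moreover have "0 \<le> (norm y)\<^sup>2" by simp
      ultimately show False by linarith
    qed
    show ?thesis using positive_zero_form[OF b r0] unfolding y_def .
  qed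
  have DPz: "D (P w) = 0" for w using bD[of w] bDz[of w] by simp
  have PDz: "P (D w) = 0" for w
  proof (rule cinner_eq_ext)
    fix z
    have "cinner z (P (D w)) = cinner (P z) (D w)" by (rule positive_herm[OF P, symmetric])
    also have "\<dots> = cinner (P z) (b w) - cinner (P z) (P w)" unfolding D_def by (rule cinner_diff_right)
    also have "\<dots> = cinner (b (P z)) w - cinner (P (P z)) w"
      using positive_herm[OF b, of "P z" w] positive_herm[OF P, of "P z" w] by simp
    also have "\<dots> = cinner (D (P z)) w" unfolding D_def by (simp add: cinner_diff_left)
    also have "\<dots> = 0" using DPz by simp
    finally show "cinner z (P (D w)) = cinner z 0" by simp
  qed
  have "D w = 0" for w
  proof -
    have "cinner (D w) (D w) = cinner (D w) (b w) - cinner (D w) (P w)"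
      using cinner_diff_right[of "D w" "b w" "P w"] by (simp add: D_def)
    also have "\<dots> = cinner (b (D w)) w - cinner (P (D w)) w"
      using positive_herm[OF b, of "D w" w] positive_herm[OF P, of "D w" w] by simp
    also have "\<dots> = 0" using bDz PDz by simp
    finally show ?thesis using cinner_self_zero[of "D w"] by simp
  qed
  then show ?thesis unfolding D_def by (auto simp: fun_eq_iff)
qed

lemma op_abs_self:
  fixes p :: "'a::{complex_inner,complete_space} \<Rightarrow> 'a"
  assumes p: "positive_op p" and adj: "cadjoint p = p"
  shows "op_abs p = p"
proof -
  have "op_abs p = op_sqrt (p \<circ> p)" unfolding op_abs_def adj ..
  also have "\<dots> = (THE b. positive_op b \<and> b \<circ> b = p \<circ> p)" unfolding op_sqrt_def ..
  also have "\<dots> = p"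
  proof (rule the_equality)
    show "positive_op p \<and> p \<circ> p = p \<circ> p" using p by simp
    show "positive_op b \<and> b \<circ> b = p \<circ> p \<Longrightarrow> b = p" for b using sqrt_unique[OF _ p] by blast
  qed
  finally show ?thesis .
qed




lemma polarization0:
  fixes F :: "'v::complex_vector \<Rightarrow> 'v \<Rightarrow> complex"
  assumes addr: "\<And>x y z. F x (y + z) = F x y + F x z"
    and addl: "\<And>x y z. F (x + y) z = F x z + F y z"
    and scr: "\<And>x a y. F x (scaleC a y) = a * F x y"
    and scl: "\<And>x a y. F (scaleC a x) y = cnj a * F x y"
    and zero: "\<And>z. F z z = 0"
  shows "F x y = 0"
proof -
  have 1: "F x y + F y x = 0" using zero[of "x + y"] zero[of x] zero[of y] by (simp add: addr addl algebra_simps)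
  have 2: "\<i> * F x y - \<i> * F y x = 0"
    using zero[of "x + scaleC \<i> y"] zero[of x] zero[of y] by (simp add: addr addl scr scl algebra_simps)
  from 2 have "F x y - F y x = 0" by (simp add: right_diff_distrib[symmetric])
  with 1 show ?thesis by (simp add: algebra_simps)
qed

context
  fixes A :: "('h::{complex_inner,complete_space} \<Rightarrow> 'h) set"
    and act :: "'e::{complex_vector,banach} \<Rightarrow> ('h \<Rightarrow> 'h) \<Rightarrow> 'e"
    and ip :: "'e \<Rightarrow> 'e \<Rightarrow> ('h \<Rightarrow> 'h)"
  assumes hm: "hilbert_module A act ip" and AB: "A \<subseteq> {f. bounded_clinear f}"
begin

lemma ip_in: "ip x y \<in> A" using hm by (simp add: hilbert_module_def)
lemma ip_bcl: "bounded_clinear (ip x y)" using ip_in AB by blast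
lemma ip_bl: "bounded_linear (ip x y)" by (rule bclin_linear[OF ip_bcl])
lemma ip_add_r: "ip x (y + z) h = ip x y h + ip x z h"
  using hm by (simp add: hilbert_module_def)
lemma ip_sc_r: "ip x (scaleC c y) h = scaleC c (ip x y h)"
  using hm by (simp add: hilbert_module_def)
lemma ip_act: "a \<in> A \<Longrightarrow> ip x (act y a) h = ip x y (a h)"
  using hm by (simp add: hilbert_module_def)
lemma ip_adj: "cadjoint (ip x y) = ip y x"
  using hm by (simp add: hilbert_module_def)
lemma ip_pos: "positive_op (ip x x)"
  using hm by (simp add: hilbert_module_def)
lemma ip_norm: "norm x = sqrt (onorm (ip x x))"
  using hm by (simp add: hilbert_module_def)

lemma ip_swap: "cinner h (ip x y k) = cinner (ip y x h) k"
  using cadjoint_rel[OF ip_bcl, of y x h k] ip_adj[of y x] by simp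

lemma ip_add_l: "ip (x1 + x2) y h = ip x1 y h + ip x2 y h"
proof (rule cinner_eq_ext)
  fix g
  have "cinner g (ip (x1 + x2) y h) = cinner (ip y (x1 + x2) g) h" by (rule ip_swap)
  also have "\<dots> = cinner (ip y x1 g) h + cinner (ip y x2 g) h" by (simp add: ip_add_r cinner_add_left)
  also have "\<dots> = cinner g (ip x1 y h) + cinner g (ip x2 y h)" by (simp add: ip_swap)
  finally show "cinner g (ip (x1 + x2) y h) = cinner g (ip x1 y h + ip x2 y h)"
    by (simp add: cinner_add_right)
qed

lemma ip_sc_l: "ip (scaleC a x) y h = scaleC (cnj a) (ip x y h)"
proof (rule cinner_eq_ext)
  fix g
  have "cinner g (ip (scaleC a x) y h) = cinner (ip y (scaleC a x) g) h" by (rule ip_swap)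
  also have "\<dots> = cnj a * cinner (ip y x g) h" by (simp add: ip_sc_r cinner_scaleC_left)
  also have "\<dots> = cnj a * cinner g (ip x y h)" by (simp add: ip_swap)
  finally show "cinner g (ip (scaleC a x) y h) = cinner g (scaleC (cnj a) (ip x y h))"
    by (simp add: cinner_scaleC_right)
qed

lemma ip_diff_l: "ip (x1 - x2) y h = ip x1 y h - ip x2 y h"
proof -
  have "ip (x1 - x2) y h = ip (x1 + scaleC (-1) x2) y h" by (simp add: scaleC_minus1)
  also have "\<dots> = ip x1 y h - ip x2 y h" by (simp only: ip_add_l ip_sc_l) (simp add: scaleC_minus1)
  finally show ?thesis .
qed

lemma ip_diff_r: "ip x (y1 - y2) h = ip x y1 h - ip x y2 h"
proof -
  have "ip x (y1 - y2) h = ip x (y1 + scaleC (-1) y2) h" by (simp add: scaleC_minus1)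
  also have "\<dots> = ip x y1 h - ip x y2 h" by (simp only: ip_add_r ip_sc_r) (simp add: scaleC_minus1)
  finally show ?thesis .
qed

lemma norm_sq_onorm: "(norm x)\<^sup>2 = onorm (ip x x)"
  using ip_norm[of x] onorm_pos_le[OF ip_bl[of x x]] by simp

lemma ip_bound_self: "norm (ip x x h) \<le> (norm x)\<^sup>2 * norm h"
  using onorm[OF ip_bl[of x x], of h] norm_sq_onorm[of x] by simp

lemma form_bound_self: "Re (cinner h (ip x x h)) \<le> (norm x)\<^sup>2 * (norm h)\<^sup>2"
proof -
  have "Re (cinner h (ip x x h)) \<le> cmod (cinner h (ip x x h))" by (rule complex_Re_le_cmod)
  also have "\<dots> \<le> norm h * norm (ip x x h)" by (rule cinner_CS)
  also have "\<dots> \<le> norm h * ((norm x)\<^sup>2 * norm h)" by (intro mult_left_mono ip_bound_self) simp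
  finally show ?thesis by (simp add: power2_eq_square mult_ac)
qed

lemma form_CS:
  "(cmod (cinner h (ip x y h)))\<^sup>2 \<le> Re (cinner h (ip x x h)) * Re (cinner h (ip y y h))"
proof (rule generic_CS[where F="\<lambda>x y. cinner h (ip x y h)"])
  show "cinner h (ip x (y + z) h) = cinner h (ip x y h) + cinner h (ip x z h)" for x y z
    by (simp add: ip_add_r cinner_add_right)
  show "cinner h (ip x (scaleC a y) h) = a * cinner h (ip x y h)" for x a y
    by (simp add: ip_sc_r cinner_scaleC_right)
  show "cinner h (ip x y h) = cnj (cinner h (ip y x h))" for x y
    using ip_swap[of h x y h] cinner_commute[of "ip y x h" h] by simp
  show "0 \<le> Re (cinner h (ip x x h))" for x using ip_pos[of x] by (simp add: positive_op_def)
qed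

lemma module_CS: "norm (ip u v h) \<le> norm u * norm v * norm h"
proof -
  define a where "a = ip u v"
  have aA: "a \<in> A" unfolding a_def by (rule ip_in)
  define w where "w = act u a"
  have e1: "cinner (a h) (a h) = cinner h (ip v w h)"
  proof -
    have "cinner (a h) (a h) = cinner h (ip v u (a h))" unfolding a_def by (rule ip_swap[symmetric])
    also have "ip v u (a h) = ip v w h" unfolding w_def by (rule ip_act[OF aA, symmetric])
    finally show ?thesis .
  qed
  have e2: "cinner h (ip w w h) = cinner (ip u u (a h)) (a h)"
  proof -
    have "cinner h (ip w w h) = cinner h (ip w u (a h))" unfolding w_def[of] by (simp add: w_def ip_act[OF aA])
    also have "\<dots> = cinner (ip u w h) (a h)" by (rule ip_swap)
    also have "ip u w h = ip u u (a h)" unfolding w_def by (rule ip_act[OF aA])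
    finally show ?thesis .
  qed
  have Rw: "Re (cinner h (ip w w h)) \<le> (norm u)\<^sup>2 * (norm (a h))\<^sup>2"
  proof -
    have "Re (cinner h (ip w w h)) \<le> cmod (cinner (ip u u (a h)) (a h))" unfolding e2 by (rule complex_Re_le_cmod)
    also have "\<dots> \<le> norm (ip u u (a h)) * norm (a h)" by (rule cinner_CS)
    also have "\<dots> \<le> ((norm u)\<^sup>2 * norm (a h)) * norm (a h)" by (intro mult_right_mono ip_bound_self) simp
    finally show ?thesis by (simp add: power2_eq_square mult_ac)
  qed
  have Rv: "Re (cinner h (ip v v h)) \<le> (norm v)\<^sup>2 * (norm h)\<^sup>2" by (rule form_bound_self)
  have n4: "(cmod (cinner (a h) (a h)))\<^sup>2 = ((norm (a h))\<^sup>2)\<^sup>2"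
    by (simp only: cinner_self norm_of_real) simp
  have "((norm (a h))\<^sup>2)\<^sup>2 \<le> Re (cinner h (ip v v h)) * Re (cinner h (ip w w h))"
    using form_CS[of h v w] e1 n4 by simp
  also have "\<dots> \<le> ((norm v)\<^sup>2 * (norm h)\<^sup>2) * ((norm u)\<^sup>2 * (norm (a h))\<^sup>2)"
    using Rv Rw ip_pos[of v] ip_pos[of w] by (intro mult_mono) (auto simp: positive_op_def)
  finally have fin: "(norm (a h))\<^sup>2 * (norm (a h))\<^sup>2 \<le> (norm (a h))\<^sup>2 * (norm u * norm v * norm h)\<^sup>2"
    by (simp add: power2_eq_square mult_ac)
  have "(norm (a h))\<^sup>2 \<le> (norm u * norm v * norm h)\<^sup>2"
  proof (cases "norm (a h) = 0")
    case True then show ?thesis by simp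
  next
    case False
    then have "0 < (norm (a h))\<^sup>2" by simp
    with fin show ?thesis by (rule mult_left_le_imp_le)
  qed
  then show ?thesis unfolding a_def by (rule power2_le_imp_le) simp
qed

lemma op_abs_ip: "op_abs (ip x x) = ip x x"
  by (rule op_abs_self[OF ip_pos ip_adj])

lemma isometry_polar:
  assumes S: "bounded_clinear S" and Q: "\<And>z. ip (S z) (S z) = (\<lambda>h. k *\<^sub>R ip z z h)"
  shows "ip (S x) (S y) h = k *\<^sub>R ip x y h"
proof (rule cinner_eq_ext)
  fix g
  define F where "F = (\<lambda>x y. cinner g (ip (S x) (S y) h) - complex_of_real k * cinner g (ip x y h))"
  have "F x y = 0"
  proof (rule polarization0)
    show "F x (y + z) = F x y + F x z" for x y z
      unfolding F_def by (simp add: bclin_add[OF S] ip_add_r cinner_add_right algebra_simps)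
    show "F (x + y) z = F x z + F y z" for x y z
      unfolding F_def by (simp add: bclin_add[OF S] ip_add_l cinner_add_right algebra_simps)
    show "F x (scaleC a y) = a * F x y" for x a y
      unfolding F_def by (simp add: bclin_scaleC[OF S] ip_sc_r cinner_scaleC_right algebra_simps)
    show "F (scaleC a x) y = cnj a * F x y" for x a y
      unfolding F_def by (simp add: bclin_scaleC[OF S] ip_sc_l cinner_scaleC_right algebra_simps)
    show "F z z = 0" for z
      unfolding F_def using Q[of z] by (simp add: cinner_scaleR_right)
  qed
  then show "cinner g (ip (S x) (S y) h) = cinner g (k *\<^sub>R ip x y h)"
    unfolding F_def by (simp add: cinner_scaleR_right)
qed

end




lemma final_real:
  fixes \<theta> \<delta> \<gamma> m t :: real
  assumes th0: "0 \<le> \<theta>" and th1: "\<theta> < 1" and d0: "0 \<le> \<delta>" and g0: "0 \<le> \<gamma>" and m0: "0 \<le> m"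
    and t1: "(1 - \<theta>)\<^sup>2 * m \<le> t"
  shows "(\<theta>\<^sup>2 + 2 * \<theta> + \<delta>) * m + \<bar>m - t\<bar> * \<gamma>
      \<le> ((\<theta>\<^sup>2 + 2 * \<theta> + \<delta> + (\<theta>\<^sup>2 - 2 * \<theta> + 2) * \<gamma>) / (1 - \<theta>)\<^sup>2) * t"
proof -
  define d where "d = (1 - \<theta>)\<^sup>2"
  define A where "A = \<theta>\<^sup>2 + 2 * \<theta> + \<delta>"
  define N where "N = \<theta>\<^sup>2 + 2 * \<theta> + \<delta> + (\<theta>\<^sup>2 - 2 * \<theta> + 2) * \<gamma>"
  define \<epsilon> where "\<epsilon> = N / d"
  have dpos: "0 < d" unfolding d_def using th1 by simp
  have d1: "d \<le> 1" unfolding d_def using th0 th1 by (simp add: power_le_one)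
  have ed: "\<epsilon> * d = N" unfolding \<epsilon>_def using dpos by simp
  have A0: "0 \<le> A" unfolding A_def using th0 d0 by simp
  have q: "\<theta>\<^sup>2 - 2 * \<theta> + 2 = d + 1" unfolding d_def by (simp add: power2_eq_square algebra_simps)
  have NA: "N = A + (d + 1) * \<gamma>" unfolding N_def A_def q ..
  have t0: "0 \<le> t" using t1 dpos m0 unfolding d_def[symmetric] by (meson mult_nonneg_nonneg less_imp_le order_trans)
  have eA: "A \<le> \<epsilon>"
  proof -
    have "A * d \<le> A * 1" using d1 A0 by (rule mult_left_mono)
    also have "\<dots> \<le> N" unfolding NA using g0 dpos by simp
    finally have "A * d \<le> \<epsilon> * d" using ed by simp
    then show ?thesis using dpos by simp
  qed
  have eg: "\<gamma> \<le> \<epsilon>"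
  proof -
    have "\<gamma> * d \<le> N" unfolding NA using A0 g0 by (simp add: algebra_simps)
    then have "\<gamma> * d \<le> \<epsilon> * d" using ed by simp
    then show ?thesis using dpos by simp
  qed
  have main: "A * m + \<bar>m - t\<bar> * \<gamma> \<le> \<epsilon> * t"
  proof (cases "m \<le> t")
    case True
    have "A * m \<le> \<epsilon> * m" using eA m0 by (rule mult_right_mono)
    moreover have "(t - m) * \<gamma> \<le> (t - m) * \<epsilon>" using eg True by (intro mult_left_mono) auto
    ultimately have "A * m + (t - m) * \<gamma> \<le> \<epsilon> * t" by (simp add: algebra_simps)
    then show ?thesis using True by simp
  next
    case False
    have "(A + \<gamma>) * m \<le> (N + \<gamma> * d) * m"
    proof (rule mult_right_mono[OF _ m0])
      have "N + \<gamma> * d - (A + \<gamma>) = 2 * (\<gamma> * d)" unfolding NA by (simp add: algebra_simps)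
      moreover have "0 \<le> \<gamma> * d" using g0 dpos by simp
      ultimately show "A + \<gamma> \<le> N + \<gamma> * d" by linarith
    qed
    also have "(N + \<gamma> * d) * m = (\<epsilon> + \<gamma>) * (d * m)" using ed by (simp add: algebra_simps)
    also have "\<dots> \<le> (\<epsilon> + \<gamma>) * t"
    proof (rule mult_left_mono)
      show "d * m \<le> t" using t1 unfolding d_def .
      show "0 \<le> \<epsilon> + \<gamma>" using eg g0 by simp
    qed
    finally have "(A + \<gamma>) * m \<le> (\<epsilon> + \<gamma>) * t" .
    then have "A * m + (m - t) * \<gamma> \<le> \<epsilon> * t" by (simp add: algebra_simps)
    then show ?thesis using False by simp
  qed
  then show ?thesis unfolding A_def \<epsilon>_def N_def d_def .
qed

theorem theorem2p4:
  fixes A :: "('h::{complex_inner,complete_space} \<Rightarrow> 'h) set"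
    and act :: "'e::{complex_vector,banach} \<Rightarrow> ('h \<Rightarrow> 'h) \<Rightarrow> 'e"
    and ip :: "'e \<Rightarrow> 'e \<Rightarrow> ('h \<Rightarrow> 'h)"
    and S T :: "'e \<Rightarrow> 'e"
    and c :: "'h \<Rightarrow> 'h"
    and \<delta> \<theta> :: real
  assumes dimH: "\<exists>u v :: 'h. \<forall>a b. scaleC a u + scaleC b v = 0 \<longrightarrow> a = 0 \<and> b = 0"
    and A_cstar: "cstar_subalgebra A"
    and K_sub_A: "{f. compact_op f} \<subseteq> A"
    and A_sub_B: "A \<subseteq> {f. bounded_clinear f}"
    and E_module: "hilbert_module A act ip"
    and E_full: "full_module A ip"
    and S_bdd: "bounded_clinear S"
    and S_nonzero: "S \<noteq> (\<lambda>_. 0)"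
    and S_abs: "\<forall>x y. op_abs (ip (S x) (S y)) = (\<lambda>h. (onorm S)\<^sup>2 *\<^sub>R op_abs (ip x y) h)"
    and c_in: "c \<in> A"
    and c_norm: "onorm c < 1"
    and \<delta>_range: "0 \<le> \<delta>" "\<delta> < 1 - onorm c"
    and \<theta>_range: "0 \<le> \<theta>" "\<theta> < 1"
    and T_lin: "bounded_clinear T"
    and T_close: "onorm (\<lambda>x. T x - S x) \<le> \<theta> * onorm S"
  shows "angle_preserving ip \<delta>
           ((\<theta>\<^sup>2 + 2 * \<theta> + \<delta> + (\<theta>\<^sup>2 - 2 * \<theta> + 2) * onorm c) / (1 - \<theta>)\<^sup>2) c T"
proof -
  define sS where "sS = onorm S"
  define k where "k = sS\<^sup>2"
  define \<gamma> where "\<gamma> = onorm c"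
  define \<epsilon> where "\<epsilon> = (\<theta>\<^sup>2 + 2 * \<theta> + \<delta> + (\<theta>\<^sup>2 - 2 * \<theta> + 2) * \<gamma>) / (1 - \<theta>)\<^sup>2"
  have blS: "bounded_linear S" by (rule bclin_linear[OF S_bdd])
  have blT: "bounded_linear T" by (rule bclin_linear[OF T_lin])
  have blc: "bounded_linear c" using c_in A_sub_B bclin_linear by blast
  have sS0: "0 \<le> sS" unfolding sS_def by (rule onorm_pos_le[OF blS])
  have g0: "0 \<le> \<gamma>" unfolding \<gamma>_def by (rule onorm_pos_le[OF blc])
  have SS: "ip (S z) (S z) = (\<lambda>h. k *\<^sub>R ip z z h)" for z
    using S_abs op_abs_ip[OF E_module A_sub_B, of "S z"] op_abs_ip[OF E_module A_sub_B, of z]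
    unfolding k_def sS_def by metis
  have SSxy: "ip (S x) (S y) h = k *\<^sub>R ip x y h" for x y h
    by (rule isometry_polar[OF E_module A_sub_B S_bdd SS])
  have normS: "norm (S x) = sS * norm x" for x
  proof -
    have "(norm (S x))\<^sup>2 = onorm (ip (S x) (S x))" by (rule norm_sq_onorm[OF E_module A_sub_B])
    also have "\<dots> = onorm (\<lambda>h. k *\<^sub>R ip x x h)" unfolding SS ..
    also have "\<dots> = \<bar>k\<bar> * onorm (ip x x)" by (rule onorm_scaleR[OF ip_bl[OF E_module A_sub_B]])
    also have "\<dots> = (sS * norm x)\<^sup>2"
      unfolding norm_sq_onorm[OF E_module A_sub_B, symmetric] k_def by (simp add: power_mult_distrib)
    finally show ?thesis using sS0 by (simp add: power2_eq_iff_nonneg)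
  qed
  have blTS: "bounded_linear (\<lambda>x. T x - S x)" by (rule bounded_linear_sub[OF blT blS])
  have TS: "norm (T x - S x) \<le> \<theta> * sS * norm x" for x
  proof -
    have "norm (T x - S x) \<le> onorm (\<lambda>x. T x - S x) * norm x" using onorm[OF blTS, of x] by simp
    also have "\<dots> \<le> \<theta> * sS * norm x" using T_close unfolding sS_def by (intro mult_right_mono) auto
    finally show ?thesis .
  qed
  have Tup: "norm (T x) \<le> (1 + \<theta>) * sS * norm x" for x
  proof -
    have "norm (T x) = norm (S x + (T x - S x))" by simp
    also have "\<dots> \<le> norm (S x) + norm (T x - S x)" by (rule norm_triangle_ineq)
    also have "\<dots> \<le> sS * norm x + \<theta> * sS * norm x" using normS TS by (intro add_mono) auto
    finally show ?thesis by (simp add: algebra_simps)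
  qed
  have Tlo: "(1 - \<theta>) * sS * norm x \<le> norm (T x)" for x
  proof -
    have "sS * norm x = norm (T x - (T x - S x))" using normS by simp
    also have "\<dots> \<le> norm (T x) + norm (T x - S x)" by (rule norm_triangle_ineq4)
    also have "\<dots> \<le> norm (T x) + \<theta> * sS * norm x" using TS by simp
    finally show ?thesis by (simp add: algebra_simps)
  qed
  have e0: "0 \<le> \<epsilon>"
  proof -
    have "\<theta>\<^sup>2 - 2 * \<theta> + 2 = (1 - \<theta>)\<^sup>2 + 1" by (simp add: power2_eq_square algebra_simps)
    moreover have "0 \<le> (1 - \<theta>)\<^sup>2" by simp
    ultimately have p: "0 \<le> \<theta>\<^sup>2 - 2 * \<theta> + 2" by linarith
    have "0 \<le> (\<theta>\<^sup>2 - 2 * \<theta> + 2) * \<gamma>" by (rule mult_nonneg_nonneg[OF p g0])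
    moreover have "0 \<le> \<theta>\<^sup>2" by simp
    ultimately have "0 \<le> \<theta>\<^sup>2 + 2 * \<theta> + \<delta> + (\<theta>\<^sup>2 - 2 * \<theta> + 2) * \<gamma>"
      using \<theta>_range \<delta>_range by linarith
    then show ?thesis unfolding \<epsilon>_def by simp
  qed
  show ?thesis
    unfolding angle_preserving_def angle_rel_def \<gamma>_def[symmetric] \<epsilon>_def[symmetric]
  proof (intro allI impI)
    fix x y
    assume H: "onorm (\<lambda>h. ip x y h - (norm x * norm y) *\<^sub>R c h) \<le> \<delta> * norm x * norm y"
    define a where "a = norm x"
    define b where "b = norm y"
    define X where "X = norm (T x)"
    define Y where "Y = norm (T y)"
    define t where "t = X * Y"
    define m where "m = k * a * b"
    have a0: "0 \<le> a" "0 \<le> b" unfolding a_def b_def by simp_all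
    have blc2: "bounded_linear (\<lambda>h. (a * b) *\<^sub>R c h)"
      by (rule bounded_linear_compose[OF bounded_linear_scaleR_right blc])
    have blxy: "bounded_linear (\<lambda>h. ip x y h - (a * b) *\<^sub>R c h)"
      by (rule bounded_linear_sub[OF ip_bl[OF E_module A_sub_B] blc2])
    have tlow: "(1 - \<theta>)\<^sup>2 * m \<le> t"
    proof -
      have "((1 - \<theta>) * sS * a) * ((1 - \<theta>) * sS * b) \<le> X * Y"
        unfolding X_def Y_def a_def b_def
        using Tlo \<theta>_range sS0 by (intro mult_mono) auto
      then show ?thesis unfolding t_def m_def k_def by (simp add: power2_eq_square mult_ac)
    qed
    have t0: "0 \<le> t" unfolding t_def X_def Y_def by simp
    have bound: "norm (ip (T x) (T y) h - t *\<^sub>R c h) \<le> \<epsilon> * t * norm h" for h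
    proof -
      have dec: "ip (T x) (T y) h - t *\<^sub>R c h =
          ip (T x - S x) (T y) h + ip (S x) (T y - S y) h
          + k *\<^sub>R (ip x y h - (a * b) *\<^sub>R c h) + (m - t) *\<^sub>R c h"
        unfolding m_def
        by (simp add: ip_diff_l[OF E_module A_sub_B] ip_diff_r[OF E_module A_sub_B] SSxy
            scaleR_diff_right scaleR_diff_left algebra_simps)
      have n1: "norm (ip (T x - S x) (T y) h) \<le> (\<theta> * sS * a) * ((1 + \<theta>) * sS * b) * norm h"
      proof -
        have "norm (ip (T x - S x) (T y) h) \<le> norm (T x - S x) * norm (T y) * norm h"
          by (rule module_CS[OF E_module A_sub_B])
        also have "\<dots> \<le> (\<theta> * sS * a) * ((1 + \<theta>) * sS * b) * norm h"
          unfolding a_def b_def using TS Tup \<theta>_range sS0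
          by (intro mult_right_mono mult_mono) auto
        finally show ?thesis .
      qed
      have n2: "norm (ip (S x) (T y - S y) h) \<le> (sS * a) * (\<theta> * sS * b) * norm h"
      proof -
        have "norm (ip (S x) (T y - S y) h) \<le> norm (S x) * norm (T y - S y) * norm h"
          by (rule module_CS[OF E_module A_sub_B])
        also have "\<dots> \<le> (sS * a) * (\<theta> * sS * b) * norm h"
          unfolding a_def b_def using normS TS \<theta>_range sS0
          by (intro mult_right_mono mult_mono) auto
        finally show ?thesis .
      qed
      have n3: "norm (k *\<^sub>R (ip x y h - (a * b) *\<^sub>R c h)) \<le> k * (\<delta> * a * b) * norm h"
      proof -
        have k0: "0 \<le> k" unfolding k_def by simp
        have "norm (ip x y h - (a * b) *\<^sub>R c h) \<le> onorm (\<lambda>h. ip x y h - (a * b) *\<^sub>R c h) * norm h"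
          using onorm[OF blxy, of h] by simp
        also have "\<dots> \<le> (\<delta> * a * b) * norm h"
          using H unfolding a_def b_def by (intro mult_right_mono) auto
        finally show ?thesis using k0 by (simp add: mult_left_mono mult.assoc)
      qed
      have n4: "norm ((m - t) *\<^sub>R c h) \<le> \<bar>m - t\<bar> * \<gamma> * norm h"
      proof -
        have "norm (c h) \<le> \<gamma> * norm h" unfolding \<gamma>_def by (rule onorm[OF blc])
        then show ?thesis by (simp add: mult_left_mono mult.assoc)
      qed
      have "norm (ip (T x) (T y) h - t *\<^sub>R c h) \<le>
          norm (ip (T x - S x) (T y) h) + norm (ip (S x) (T y - S y) h)
          + norm (k *\<^sub>R (ip x y h - (a * b) *\<^sub>R c h)) + norm ((m - t) *\<^sub>R c h)"
        unfolding dec by (intro norm_triangle_le add_mono order_refl norm_triangle_ineq)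
      also have "\<dots> \<le> (\<theta> * sS * a) * ((1 + \<theta>) * sS * b) * norm h + (sS * a) * (\<theta> * sS * b) * norm h
          + k * (\<delta> * a * b) * norm h + \<bar>m - t\<bar> * \<gamma> * norm h"
        using n1 n2 n3 n4 by (intro add_mono)
      also have "\<dots> = ((\<theta>\<^sup>2 + 2 * \<theta> + \<delta>) * m + \<bar>m - t\<bar> * \<gamma>) * norm h"
        unfolding m_def k_def by (simp add: power2_eq_square algebra_simps)
      also have "\<dots> \<le> (\<epsilon> * t) * norm h"
      proof (rule mult_right_mono)
        show "(\<theta>\<^sup>2 + 2 * \<theta> + \<delta>) * m + \<bar>m - t\<bar> * \<gamma> \<le> \<epsilon> * t"
          unfolding \<epsilon>_def
          by (rule final_real[OF \<theta>_range \<delta>_range(1) g0 _ tlow]) (simp add: m_def k_def a0)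
      qed simp
      finally show ?thesis .
    qed
    have "onorm (\<lambda>h. ip (T x) (T y) h - (norm (T x) * norm (T y)) *\<^sub>R c h) \<le> \<epsilon> * t"
      by (rule onorm_bound) (use e0 t0 bound in \<open>auto simp: t_def X_def Y_def\<close>)
    then show "onorm (\<lambda>h. ip (T x) (T y) h - (norm (T x) * norm (T y)) *\<^sub>R c h)
        \<le> \<epsilon> * norm (T x) * norm (T y)"
      unfolding t_def X_def Y_def by (simp add: mult.assoc)
  qed
qed


end
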